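(* Let $F=\begin{pmatrix}1&0&-1\\0&0&0\\-1&0&1\end{pmatrix}$ (edge detect A filter). Then for all $m,n\in\mathbb{N}$, it is not the case that the equation $F*X=B$ with the periodic boundary condition, for unknown $X\in\mathbb{R}^{m\times n}$, has a unique solution for every $B\in\mathbb{R}^{m\times n}$.
   Context: For $F=[f_{ij}]\in\mathbb{R}^{3\times3}$ and $X=[x_{ij}]\in\mathbb{R}^{m\times n}$, the convolution $F*X\in\mathbb{R}^{m\times n}$ is defined by $[F*X]_{ij}=\sum_{l_1=1}^3\sum_{l_2=1}^3 f_{l_1l_2}\,x_{i-l_1+2,\,j-l_2+2}$ for $1\le i\le m$, $1\le j\le n$, where the periodic boundary condition sets $x_{0j}=x_{mj}$, $x_{m+1,j}=x_{1j}$, $x_{i0}=x_{in}$, $x_{i,n+1}=x_{i1}$ (for all indices $i\in\{0,\dots,m+1\}$, $j\in\{0,\dots,n+1\}$, so corners are also determined, e.g. $x_{00}=x_{mn}$). *)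

theory Defs
  imports Complex_Main
begin

text \<open>An m x n real matrix is represented as a function nat => nat => real whose
  entries are indexed by 1..m and 1..n (1-based, as in the paper) and which is zero
  outside that range, so that function equality is matrix equality.\<close>

definition mats :: "nat \<Rightarrow> nat \<Rightarrow> (nat \<Rightarrow> nat \<Rightarrow> real) set" where
  "mats m n = {X. \<forall>i j. (i \<notin> {1..m} \<or> j \<notin> {1..n}) \<longrightarrow> X i j = 0}"

text \<open>Periodic extension: the entry x_{ij} for arbitrary integer indices i, j,
  with x_{0j} = x_{mj}, x_{m+1,j} = x_{1j}, etc.\<close>

definition pext :: "nat \<Rightarrow> nat \<Rightarrow> (nat \<Rightarrow> nat \<Rightarrow> real) \<Rightarrow> int \<Rightarrow> int \<Rightarrow> real" where
  "pext m n X i j = X (nat ((i - 1) mod int m + 1)) (nat ((j - 1) mod int n + 1))"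

definition conv :: "(nat \<Rightarrow> nat \<Rightarrow> real) \<Rightarrow> nat \<Rightarrow> nat \<Rightarrow> (nat \<Rightarrow> nat \<Rightarrow> real)
                    \<Rightarrow> nat \<Rightarrow> nat \<Rightarrow> real" where
  "conv F m n X i j =
     (\<Sum>l1\<in>{1..3::nat}. \<Sum>l2\<in>{1..3::nat}.
        F l1 l2 * pext m n X (int i - int l1 + 2) (int j - int l2 + 2))"

definition edgeA :: "nat \<Rightarrow> nat \<Rightarrow> real" where
  "edgeA i j = [[1, 0, -1], [0, 0, 0], [-1, 0, 1]] ! (i - 1) ! (j - 1)"

end

theory Submission
  imports Defs
begin

lemma pext_ones:
  assumes "m \<ge> 1" "n \<ge> 1"
  shows "pext m n (\<lambda>i j. if i \<in> {1..m} \<and> j \<in> {1..n} then 1 else 0) a b = 1"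
proof -
  have "(a - 1) mod int m \<ge> 0" "(a - 1) mod int m < int m"
       "(b - 1) mod int n \<ge> 0" "(b - 1) mod int n < int n" using assms by auto
  then have "nat ((a - 1) mod int m + 1) \<in> {1..m}" "nat ((b - 1) mod int n + 1) \<in> {1..n}"
    by auto
  then show ?thesis unfolding pext_def by simp
qed

lemma pext_zero: "pext m n (\<lambda>i j. 0) a b = 0"
  unfolding pext_def by simp

theorem corollary8:
  fixes m n :: nat
  assumes "m \<ge> 1" and "n \<ge> 1"
  shows "\<not> (\<forall>B \<in> mats m n. \<exists>!X. X \<in> mats m n \<and>
              (\<forall>i \<in> {1..m}. \<forall>j \<in> {1..n}. conv edgeA m n X i j = B i j))"
proof
  assume H: "\<forall>B \<in> mats m n. \<exists>!X. X \<in> mats m n \<and>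
              (\<forall>i \<in> {1..m}. \<forall>j \<in> {1..n}. conv edgeA m n X i j = B i j)"
  define O1 where "O1 = (\<lambda>i j. if i \<in> {1..m} \<and> j \<in> {1..n} then 1 else (0::real))"
  define Z where "Z = (\<lambda>(i::nat) (j::nat). (0::real))"
  have Zm: "Z \<in> mats m n" unfolding mats_def Z_def by simp
  have Om: "O1 \<in> mats m n" unfolding mats_def O1_def by auto
  have cz: "conv edgeA m n Z i j = Z i j" for i j
    unfolding conv_def Z_def using pext_zero[of m n] by simp
  have co: "conv edgeA m n O1 i j = Z i j" for i j
    unfolding conv_def Z_def O1_def pext_ones[OF assms]
    by (simp add: numeral_3_eq_3 numeral_2_eq_2 edgeA_def atLeastAtMostSuc_conv)
  from H Zm have "\<exists>!X. X \<in> mats m n \<and>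
              (\<forall>i \<in> {1..m}. \<forall>j \<in> {1..n}. conv edgeA m n X i j = Z i j)" by blast
  then have "O1 = Z" using Zm Om cz co by blast
  moreover have "O1 1 1 = 1" using assms unfolding O1_def by simp
  ultimately show False unfolding Z_def by simp
qed

end
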